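(* Let $K_1, K_2, K_3, K_4$ be closed subsets of standard simplices, and let $R_f \subseteq K_1 \times K_2$, $R_g \subseteq K_1 \times K_3$, $R_{g'} \subseteq K_2 \times K_4$, $R_{f'} \subseteq K_3 \times K_4$ be closed relations with $R_{f'} \circ R_g = R_{g'} \circ R_f$ (relational composition). Let $u_4: K_4 \to \mathbb{R}$ be continuous and strictly concave, and define $$u_2(y) = \max\{u_4(w) : (y,w) \in R_{g'}\}, \qquad u_3(z) = \max\{u_4(w) : (z,w) \in R_{f'}\}.$$ Define $f, g, g', f'$ as the unique optimizers $$f(x) = \arg\max_{(x,y) \in R_f} u_2(y),\quad g(x) = \arg\max_{(x,z) \in R_g} u_3(z),\quad g'(y) = \arg\max_{(y,w) \in R_{g'}} u_4(w),\quad f'(z) = \arg\max_{(z,w) \in R_{f'}} u_4(w)$$ (assuming these maxima exist and are attained uniquely, so that these are well-defined maps). Assume that for every $x \in K_1$ the set $W_x = \{w \in K_4 : (x,w) \in R_{f'} \circ R_g\}$ is non-empty and convex. Then $f' \circ g = g' \circ f$.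
   Context: Relational composition: $S \circ R = \{(a,c) : \exists b,\ (a,b) \in R,\ (b,c) \in S\}$. Strict concavity of $u_4$ presupposes that $K_4$ is convex. *)

theory Defs
  imports "HOL-Analysis.Analysis"
begin

definition std_simplex :: "(real ^ 'n) set" where
  "std_simplex = {x. (\<forall>i. 0 \<le> x $ i) \<and> (\<Sum>i\<in>UNIV. x $ i) = 1}"

definition strictly_concave_on :: "'a::real_vector set \<Rightarrow> ('a \<Rightarrow> real) \<Rightarrow> bool" where
  "strictly_concave_on K u \<longleftrightarrow> convex K \<and>
     (\<forall>x\<in>K. \<forall>y\<in>K. \<forall>t::real. x \<noteq> y \<and> 0 < t \<and> t < 1 \<longrightarrow>
        t * u x + (1 - t) * u y < u (t *\<^sub>R x + (1 - t) *\<^sub>R y))"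

definition fiber :: "('a \<times> 'b) set \<Rightarrow> 'a \<Rightarrow> 'b set" where
  "fiber R x = {y. (x, y) \<in> R}"

text \<open>Value of the maximum of u over S (equals max u(S) when attained).\<close>
definition max_val :: "('a \<Rightarrow> real) \<Rightarrow> 'a set \<Rightarrow> real" where
  "max_val u S = Sup (u ` S)"

definition is_argmax_on :: "('a \<Rightarrow> real) \<Rightarrow> 'a set \<Rightarrow> 'a \<Rightarrow> bool" where
  "is_argmax_on u S w \<longleftrightarrow> w \<in> S \<and> (\<forall>v\<in>S. u v \<le> u w)"

definition is_unique_argmax_on :: "('a \<Rightarrow> real) \<Rightarrow> 'a set \<Rightarrow> 'a \<Rightarrow> bool" where
  "is_unique_argmax_on u S w \<longleftrightarrow> is_argmax_on u S w \<and> (\<forall>v. is_argmax_on u S v \<longrightarrow> v = w)"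

end

theory Submission
  imports Defs
begin

theorem mainTheorem13:
  fixes K1 :: "(real ^ 'n1) set" and K2 :: "(real ^ 'n2) set"
    and K3 :: "(real ^ 'n3) set" and K4 :: "(real ^ 'n4) set"
    and Rf :: "((real ^ 'n1) \<times> (real ^ 'n2)) set"
    and Rg :: "((real ^ 'n1) \<times> (real ^ 'n3)) set"
    and Rg' :: "((real ^ 'n2) \<times> (real ^ 'n4)) set"
    and Rf' :: "((real ^ 'n3) \<times> (real ^ 'n4)) set"
    and u4 :: "real ^ 'n4 \<Rightarrow> real"
    and f :: "real ^ 'n1 \<Rightarrow> real ^ 'n2" and g :: "real ^ 'n1 \<Rightarrow> real ^ 'n3"
    and g' :: "real ^ 'n2 \<Rightarrow> real ^ 'n4" and f' :: "real ^ 'n3 \<Rightarrow> real ^ 'n4"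
  assumes K1: "closed K1" "K1 \<subseteq> std_simplex"
    and K2: "closed K2" "K2 \<subseteq> std_simplex"
    and K3: "closed K3" "K3 \<subseteq> std_simplex"
    and K4: "closed K4" "K4 \<subseteq> std_simplex"
    and Rf: "closed Rf" "Rf \<subseteq> K1 \<times> K2"
    and Rg: "closed Rg" "Rg \<subseteq> K1 \<times> K3"
    and Rg': "closed Rg'" "Rg' \<subseteq> K2 \<times> K4"
    and Rf': "closed Rf'" "Rf' \<subseteq> K3 \<times> K4"
    and comm: "Rg O Rf' = Rf O Rg'"
    and u4_cont: "continuous_on K4 u4"
    and u4_conc: "strictly_concave_on K4 u4"
    and g'_def: "\<forall>y\<in>K2. is_unique_argmax_on u4 (fiber Rg' y) (g' y)"
    and f'_def: "\<forall>z\<in>K3. is_unique_argmax_on u4 (fiber Rf' z) (f' z)"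
    and f_def: "\<forall>x\<in>K1. is_unique_argmax_on (\<lambda>y. max_val u4 (fiber Rg' y)) (fiber Rf x) (f x)"
    and g_def: "\<forall>x\<in>K1. is_unique_argmax_on (\<lambda>z. max_val u4 (fiber Rf' z)) (fiber Rg x) (g x)"
    and W: "\<forall>x\<in>K1. fiber (Rg O Rf') x \<noteq> {} \<and> convex (fiber (Rg O Rf') x)"
  shows "\<forall>x\<in>K1. f' (g x) = g' (f x)"
proof
  fix x assume x: "x \<in> K1"
  define W where "W = fiber (Rg O Rf') x"
  have mv: "max_val u4 (fiber R z) = u4 (h z)" if "is_unique_argmax_on u4 (fiber R z) (h z)" for R z and h :: "'c \<Rightarrow> real ^ 'n4"
    using that unfolding max_val_def is_unique_argmax_on_def is_argmax_on_def
    by (intro cSup_eq_maximum) auto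
  have gx: "(x, g x) \<in> Rg" and gxmax: "\<forall>z\<in>fiber Rg x. max_val u4 (fiber Rf' z) \<le> max_val u4 (fiber Rf' (g x))"
    using g_def x unfolding is_unique_argmax_on_def is_argmax_on_def fiber_def by auto
  have fx: "(x, f x) \<in> Rf" and fxmax: "\<forall>y\<in>fiber Rf x. max_val u4 (fiber Rg' y) \<le> max_val u4 (fiber Rg' (f x))"
    using f_def x unfolding is_unique_argmax_on_def is_argmax_on_def fiber_def by auto
  have gK3: "g x \<in> K3" using gx Rg(2) by auto
  have fK2: "f x \<in> K2" using fx Rf(2) by auto
  have a1: "(g x, f' (g x)) \<in> Rf'" using f'_def gK3 unfolding is_unique_argmax_on_def is_argmax_on_def fiber_def by auto
  have b1: "(f x, g' (f x)) \<in> Rg'" using g'_def fK2 unfolding is_unique_argmax_on_def is_argmax_on_def fiber_def by auto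
  have aW: "f' (g x) \<in> W" using gx a1 unfolding W_def fiber_def by auto
  have bW: "g' (f x) \<in> W" using fx b1 comm unfolding W_def fiber_def by auto
  have WK4: "W \<subseteq> K4" using Rf'(2) unfolding W_def fiber_def by auto
  have amax: "u4 w \<le> u4 (f' (g x))" if "w \<in> W" for w
  proof -
    have "(x,w) \<in> Rg O Rf'" using that unfolding W_def fiber_def by auto
    then obtain z where z: "(x,z) \<in> Rg" "(z,w) \<in> Rf'" by auto
    have zK: "z \<in> K3" using z Rg(2) by auto
    have "u4 w \<le> u4 (f' z)" using f'_def zK z(2) unfolding is_unique_argmax_on_def is_argmax_on_def fiber_def by auto
    also have "\<dots> = max_val u4 (fiber Rf' z)" using mv f'_def zK by metis
    also have "\<dots> \<le> max_val u4 (fiber Rf' (g x))" using gxmax z(1) unfolding fiber_def by auto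
    also have "\<dots> = u4 (f' (g x))" using mv f'_def gK3 by metis
    finally show ?thesis .
  qed
  have bmax: "u4 w \<le> u4 (g' (f x))" if "w \<in> W" for w
  proof -
    have "(x,w) \<in> Rf O Rg'" using that comm unfolding W_def fiber_def by auto
    then obtain y where y: "(x,y) \<in> Rf" "(y,w) \<in> Rg'" by auto
    have yK: "y \<in> K2" using y Rf(2) by auto
    have "u4 w \<le> u4 (g' y)" using g'_def yK y(2) unfolding is_unique_argmax_on_def is_argmax_on_def fiber_def by auto
    also have "\<dots> = max_val u4 (fiber Rg' y)" using mv g'_def yK by metis
    also have "\<dots> \<le> max_val u4 (fiber Rg' (f x))" using fxmax y(1) unfolding fiber_def by auto
    also have "\<dots> = u4 (g' (f x))" using mv g'_def fK2 by metis
    finally show ?thesis .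
  qed
  show "f' (g x) = g' (f x)"
  proof (rule ccontr)
    assume ne: "f' (g x) \<noteq> g' (f x)"
    let ?a = "f' (g x)" and ?b = "g' (f x)"
    let ?m = "(1/2::real) *\<^sub>R ?a + (1 - 1/2) *\<^sub>R ?b"
    have cW: "convex W" using W x unfolding W_def by auto
    have mW: "?m \<in> W" using convexD[OF cW aW bW, of "1/2" "1 - 1/2"] by auto
    have eq: "u4 ?a = u4 ?b" using amax[OF bW] bmax[OF aW] by auto
    have "(1/2) * u4 ?a + (1 - 1/2) * u4 ?b < u4 ?m"
    proof -
      have "?a \<in> K4" "?b \<in> K4" using aW bW WK4 by auto
      then show ?thesis
      proof -
        assume K: "?a \<in> K4" "?b \<in> K4"
        have "\<forall>x\<in>K4. \<forall>y\<in>K4. \<forall>t::real. x \<noteq> y \<and> 0 < t \<and> t < 1 \<longrightarrow>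
          t * u4 x + (1 - t) * u4 y < u4 (t *\<^sub>R x + (1 - t) *\<^sub>R y)"
          using u4_conc unfolding strictly_concave_on_def by blast
        then have "?a \<noteq> ?b \<and> 0 < (1/2::real) \<and> (1/2::real) < 1 \<longrightarrow>
          (1/2) * u4 ?a + (1 - 1/2) * u4 ?b < u4 ?m" using K by blast
        then show ?thesis using ne by simp
      qed
    qed
    with eq have "u4 ?a < u4 ?m" by simp
    with amax[OF mW] show False by simp
  qed
qed

end
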